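(* Let $\mathbb K=[-1,1]$ and let $H:[-1,1]\times\mathbb R\to\mathbb R$ with $H(x,0)=0$ for all $x$ satisfy (H1) and (H4). Then $v_-:=\lim_{p\to-\infty}\partial_pH(-1,p)$ and $v_+:=\lim_{p\to\infty}\partial_pH(1,p)$ exist with $v_-\ge0$, $v_+\le0$, one has $\lim_{p\to-\infty}H(-1,p)/p=v_-$ and $\lim_{p\to\infty}H(1,p)/p=v_+$, and $\partial_pH(-1,p)>0$, $\partial_pH(1,p)<0$ for all $p\in\mathbb R$. If moreover $H$ satisfies (H3), then for every $c\in\mathbb R$, every $(a,q)\in(-1,1)\times(0,\infty)$ and every $(b,r)\in(-1,1)\times(-\infty,0)$ the set $\big((Q^+_{a,q})^\circ\cup(Q^-_{b,r})^\circ\big)^c\cap H^{-1}((-\infty,c])$ is compact.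
   Context: Conditions, for $\mathbb K=[-1,1]$: (H1) $H$ is $C^2$ with $\partial_p^2H>0$ on $[-1,1]\times\mathbb R$ and is the restriction of a $C^2$ function on $(-1-\epsilon,1+\epsilon)\times\mathbb R$ for some $\epsilon>0$. (H3) for each compact $K\subseteq(-1,1)$, $\lim_{|p|\to\infty}\inf_{x\in K}H(x,p)/|p|=\infty$, and $\lim_{p\to\infty}H(-1,p)/p=\infty$, $\lim_{p\to-\infty}H(1,p)/(-p)=\infty$. (H4) $\lim_{x\to-1}\operatorname{argmin}_pH(x,p)=-\infty$ and $\lim_{x\to1}\operatorname{argmin}_pH(x,p)=+\infty$. Quadrants: $Q^+_{y,q}=\{(x,p)\in[-1,1]\times\mathbb R:x\ge y,p\ge q\}$, $Q^-_{y,q}=\{(x,p)\in[-1,1]\times\mathbb R:x\le y,p\le q\}$, interiors taken in $[-1,1]\times\mathbb R$; complements taken in $[-1,1]\times\mathbb R$. *)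

theory Defs
  imports "HOL-Analysis.Analysis"
begin

definition KR :: "(real \<times> real) set" where
  "KR = {-1..1} \<times> (UNIV :: real set)"

definition C1_on :: "(real \<times> real) set \<Rightarrow> (real \<times> real \<Rightarrow> real) \<Rightarrow> bool" where
  "C1_on U f \<longleftrightarrow> (\<exists>fx fp.
     (\<forall>z\<in>U. (f has_derivative (\<lambda>(h, k). fx z * h + fp z * k)) (at z)) \<and>
     continuous_on U fx \<and> continuous_on U fp)"

definition C2_on :: "(real \<times> real) set \<Rightarrow> (real \<times> real \<Rightarrow> real) \<Rightarrow> bool" where
  "C2_on U f \<longleftrightarrow> (\<exists>fx fp.
     (\<forall>z\<in>U. (f has_derivative (\<lambda>(h, k). fx z * h + fp z * k)) (at z)) \<and>
     C1_on U fx \<and> C1_on U fp)"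

definition H1 :: "(real \<Rightarrow> real \<Rightarrow> real) \<Rightarrow> bool" where
  "H1 H \<longleftrightarrow>
     (\<exists>\<epsilon>>0. \<exists>G. C2_on ({-1-\<epsilon><..<1+\<epsilon>} \<times> UNIV) G \<and>
                 (\<forall>x\<in>{-1..1}. \<forall>p. G (x, p) = H x p)) \<and>
     (\<forall>x\<in>{-1..1}. \<forall>p. deriv (deriv (H x)) p > 0)"

text \<open>Condition (H3).  The condition on the infimum over K is written out:
  "inf_{x in K} H(x,p)/|p| tends to infinity" means that for every M,
  eventually (|p| large) all x in K satisfy H(x,p)/|p| >= M.\<close>
definition H3 :: "(real \<Rightarrow> real \<Rightarrow> real) \<Rightarrow> bool" where
  "H3 H \<longleftrightarrow>
     (\<forall>K. compact K \<and> K \<subseteq> {-1<..<1} \<longrightarrow>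
        (\<forall>M. eventually (\<lambda>p. \<forall>x\<in>K. H x p / \<bar>p\<bar> \<ge> M) at_infinity)) \<and>
     filterlim (\<lambda>p. H (-1) p / p) at_top at_top \<and>
     filterlim (\<lambda>p. H 1 p / (- p)) at_top at_bot"

text \<open>argmin of a (strictly convex) function of p, with values in the extended
  reals: the minimiser if it exists, -\<infinity> if the function is nondecreasing
  without minimum, +\<infinity> otherwise (then it is decreasing).\<close>
definition argminp :: "(real \<Rightarrow> real) \<Rightarrow> ereal" where
  "argminp f = (if \<exists>p. \<forall>q. f p \<le> f q then ereal (THE p. \<forall>q. f p \<le> f q)
                else if mono f then -\<infinity> else \<infinity>)"

definition H4 :: "(real \<Rightarrow> real \<Rightarrow> real) \<Rightarrow> bool" where
  "H4 H \<longleftrightarrow>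
     ((\<lambda>x. argminp (H x)) \<longlongrightarrow> -\<infinity>) (at_right (-1)) \<and>
     ((\<lambda>x. argminp (H x)) \<longlongrightarrow> \<infinity>) (at_left 1)"

definition Qplus :: "real \<Rightarrow> real \<Rightarrow> (real \<times> real) set" where
  "Qplus y q = {(x, p). x \<in> {-1..1} \<and> x \<ge> y \<and> p \<ge> q}"

definition Qminus :: "real \<Rightarrow> real \<Rightarrow> (real \<times> real) set" where
  "Qminus y q = {(x, p). x \<in> {-1..1} \<and> x \<le> y \<and> p \<le> q}"

definition relint_KR :: "(real \<times> real) set \<Rightarrow> (real \<times> real) set" where
  "relint_KR S = (top_of_set KR) interior_of S"

end

theory Submission
  imports Defs
begin

lemma partial2:
  fixes F :: "real \<times> real \<Rightarrow> real"
  assumes "(F has_derivative (\<lambda>(h, k). A * h + B * k)) (at (x, p))"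
  shows "((\<lambda>t. F (x, t)) has_real_derivative B) (at p)"
proof -
  have d: "((\<lambda>t. (x, t)) has_derivative (\<lambda>k. (0, k))) (at p)"
    by (auto intro!: derivative_eq_intros)
  have "((\<lambda>t. F (x, t)) has_derivative (\<lambda>k. B * k)) (at p)"
    using has_derivative_compose[OF d assms] by simp
  then show ?thesis by (simp add: has_field_derivative_def)
qed

lemma argmin_lemmas:
  fixes f f' f'' :: "real \<Rightarrow> real"
  assumes d: "\<And>p. (f has_real_derivative f' p) (at p)"
    and d2: "\<And>p. (f' has_real_derivative f'' p) (at p)"
    and pos: "\<And>p. f'' p > 0"
  shows "argminp f < ereal p \<longleftrightarrow> f' p > 0" "argminp f > ereal p \<longleftrightarrow> f' p < 0"
proof -
  have mono': "f' s < f' t" if "s < t" for s t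
    using DERIV_pos_imp_increasing[OF that] d2 pos by blast
  have cont': "isCont f' x" for x using d2 DERIV_isCont by blast
  have zero_min: "f m \<le> f q" if "f' m = 0" for m q
  proof (cases q m rule: linorder_cases)
    case less
    then obtain z where z: "q < z" "z < m" "f m - f q = (m - q) * f' z"
      using MVT2[OF less, of f f'] d by blast
    have "f' z < 0" using mono'[OF z(2)] that by simp
    then show ?thesis using z less by (smt (verit) mult_pos_neg)
  next
    case equal then show ?thesis by simp
  next
    case greater
    then obtain z where z: "m < z" "z < q" "f q - f m = (q - m) * f' z"
      using MVT2[OF greater, of f f'] d by blast
    have "f' z > 0" using mono'[OF z(1)] that by simp
    then show ?thesis using z greater by (smt (verit) mult_pos_pos)
  qed
  have min_zero: "f' m = 0" if "\<forall>q. f m \<le> f q" for m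
    using DERIV_local_min[OF d[of m], of 1] that by auto
  have argmin_eq: "argminp f = ereal m" if "f' m = 0" for m
  proof -
    have ex: "\<exists>p. \<forall>q. f p \<le> f q" using zero_min[OF that] by blast
    have "(THE p. \<forall>q. f p \<le> f q) = m"
    proof (rule the_equality)
      show "\<forall>q. f m \<le> f q" using zero_min[OF that] by blast
    next
      fix p assume "\<forall>q. f p \<le> f q"
      then have "f' p = 0" by (rule min_zero)
      then show "p = m" using that mono' by (metis linorder_neq_iff less_irrefl)
    qed
    then show ?thesis using ex unfolding argminp_def by simp
  qed
  have nomin: "\<not> (\<exists>p. \<forall>q. f p \<le> f q)" if "\<forall>q. f' q \<noteq> 0"
    using min_zero that by blast
  have case_pos: "argminp f < ereal p" if fp: "f' p > 0" for p
  proof (cases "\<exists>q<p. f' q \<le> 0")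
    case True
    then obtain q where q: "q < p" "f' q \<le> 0" by blast
    obtain m where m: "q \<le> m" "m \<le> p" "f' m = 0"
      using IVT[of f' q 0 p] q fp cont' by auto
    have "m \<noteq> p" using m fp by auto
    then show ?thesis using argmin_eq[OF m(3)] m by simp
  next
    case False
    have allpos: "\<forall>q. f' q > 0"
    proof
      fix q show "f' q > 0"
        using False fp mono'[of p q] by (smt (verit))
    qed
    have "mono f"
    proof (rule monoI)
      fix s t :: real assume "s \<le> t"
      then show "f s \<le> f t"
        using DERIV_pos_imp_increasing[of s t f] d allpos
        by (metis less_eq_real_def)
    qed
    moreover have "\<forall>q. f' q \<noteq> 0" using allpos by (metis less_irrefl)
    ultimately have "argminp f = -\<infinity>" using nomin unfolding argminp_def by auto
    then show ?thesis by simp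
  qed
  have case_neg: "argminp f > ereal p" if fp: "f' p < 0" for p
  proof (cases "\<exists>q>p. f' q \<ge> 0")
    case True
    then obtain q where q: "q > p" "f' q \<ge> 0" by blast
    obtain m where m: "p \<le> m" "m \<le> q" "f' m = 0"
      using IVT[of f' p 0 q] q fp cont' by auto
    have "m \<noteq> p" using m fp by auto
    then show ?thesis using argmin_eq[OF m(3)] m by simp
  next
    case False
    have allneg: "\<forall>q. f' q < 0"
    proof
      fix q show "f' q < 0"
        using False fp mono'[of q p] by (smt (verit))
    qed
    have "f 1 < f 0"
      using DERIV_neg_imp_decreasing[of 0 1 f] d allneg by auto
    then have "\<not> mono f" unfolding mono_def by (metis not_le zero_le_one)
    moreover have "\<forall>q. f' q \<noteq> 0" using allneg by (metis less_irrefl)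
    ultimately have "argminp f = \<infinity>" using nomin unfolding argminp_def by auto
    then show ?thesis by simp
  qed
  show "argminp f < ereal p \<longleftrightarrow> f' p > 0"
    using case_pos[of p] case_neg[of p] argmin_eq[of p]
    by (cases "f' p" "0::real" rule: linorder_cases) auto
  show "argminp f > ereal p \<longleftrightarrow> f' p < 0"
    using case_pos[of p] case_neg[of p] argmin_eq[of p]
    by (cases "f' p" "0::real" rule: linorder_cases) auto
qed


lemma core_bound:
  fixes g d :: "real \<Rightarrow> real \<Rightarrow> real" and S :: "real set"
  assumes S: "compact S"
    and cg: "continuous_on (S \<times> UNIV) (\<lambda>z. g (fst z) (snd z))"
    and cd: "continuous_on (S \<times> UNIV) (\<lambda>z. d (fst z) (snd z))"
    and dg: "\<And>x p. x \<in> S \<Longrightarrow> ((g x) has_real_derivative d x p) (at p)"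
    and mo: "\<And>x s t. x \<in> S \<Longrightarrow> s < t \<Longrightarrow> d x s < d x t"
    and ex: "\<And>x. x \<in> S \<Longrightarrow> \<exists>p. d x p > 0"
  shows "\<exists>B. \<forall>x\<in>S. \<forall>p. g x p \<le> c \<longrightarrow> p \<le> B"
proof (cases "S = {}")
  case True then show ?thesis by auto
next
  case ne: False
  have cslice: "continuous_on S (\<lambda>x. d x t)" for t
    by (rule continuous_on_compose2[OF cd, of S "\<lambda>x. (x, t)", simplified])
       (auto intro!: continuous_intros)
  have cgslice: "continuous_on S (\<lambda>x. g x t)" for t
    by (rule continuous_on_compose2[OF cg, of S "\<lambda>x. (x, t)", simplified])
       (auto intro!: continuous_intros)
  have "\<exists>A. open A \<and> A \<inter> S = (\<lambda>x. d x (real n)) -` {0<..} \<inter> S" for n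
    using cslice[of "real n"] unfolding continuous_on_open_invariant by auto
  then obtain T where T: "\<And>n. open (T n)" "\<And>n. T n \<inter> S = (\<lambda>x. d x (real n)) -` {0<..} \<inter> S"
    by metis
  have cover: "S \<subseteq> \<Union> (T ` UNIV)"
  proof
    fix x assume x: "x \<in> S"
    obtain p where p: "d x p > 0" using ex[OF x] by blast
    define n where "n = nat \<lceil>p\<rceil>"
    have "p \<le> real n" unfolding n_def by linarith
    then have "d x p \<le> d x (real n)" using mo[OF x, of p "real n"] by (cases "p = real n") auto
    then have "x \<in> T n \<inter> S" using T(2)[of n] x p by auto
    then show "x \<in> \<Union> (T ` UNIV)" by auto
  qed
  obtain N where N: "finite N" "S \<subseteq> \<Union> (T ` N)"
    using compactE_image[OF S, of UNIV T] T(1) cover by metis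
  define P where "P = real (Max N)"
  have dP: "d x P > 0" if x: "x \<in> S" for x
  proof -
    obtain n where n: "n \<in> N" "x \<in> T n" using N x by auto
    have "d x (real n) > 0" using T(2)[of n] n x by auto
    moreover have "real n \<le> P" unfolding P_def using n N by auto
    ultimately show ?thesis using mo[OF x, of "real n" P] by (cases "real n = P") auto
  qed
  obtain x1 where x1: "x1 \<in> S" "\<And>y. y \<in> S \<Longrightarrow> d x1 P \<le> d y P"
    using continuous_attains_inf[OF S ne cslice[of P]] by blast
  obtain x2 where x2: "x2 \<in> S" "\<And>y. y \<in> S \<Longrightarrow> g x2 P \<le> g y P"
    using continuous_attains_inf[OF S ne cgslice[of P]] by blast
  define \<delta> where "\<delta> = d x1 P"
  define m0 where "m0 = g x2 P"
  have \<delta>: "\<delta> > 0" unfolding \<delta>_def using dP x1 by auto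
  show ?thesis
  proof (intro exI[of _ "max P (P + (c - m0) / \<delta>)"] ballI allI impI)
    fix x p assume x: "x \<in> S" and gc: "g x p \<le> c"
    show "p \<le> max P (P + (c - m0) / \<delta>)"
    proof (cases "p \<le> P")
      case True then show ?thesis by simp
    next
      case False
      then have Pp: "P < p" by simp
      obtain z where z: "P < z" "z < p" "g x p - g x P = (p - P) * d x z"
        using MVT2[OF Pp, of "g x" "d x"] dg[OF x] by blast
      have "d x z \<ge> \<delta>" using mo[OF x z(1)] x1(2)[OF x] unfolding \<delta>_def by simp
      then have "(p - P) * \<delta> \<le> (p - P) * d x z" using Pp by simp
      moreover have "m0 \<le> g x P" unfolding m0_def using x2(2)[OF x] .
      ultimately have "(p - P) * \<delta> \<le> c - m0" using z(3) gc by linarith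
      then have "p - P \<le> (c - m0) / \<delta>" using \<delta> by (simp add: pos_le_divide_eq)
      then show ?thesis by simp
    qed
  qed
qed


theorem mainTheorem9:
  fixes H :: "real \<Rightarrow> real \<Rightarrow> real"
  assumes H0: "\<forall>x\<in>{-1..1}. H x 0 = 0"
    and h1: "H1 H"
    and h4: "H4 H"
  shows "(\<exists>vm vp.
            ((\<lambda>p. deriv (H (-1)) p) \<longlongrightarrow> vm) at_bot \<and>
            ((\<lambda>p. deriv (H 1) p) \<longlongrightarrow> vp) at_top \<and>
            vm \<ge> 0 \<and> vp \<le> 0 \<and>
            ((\<lambda>p. H (-1) p / p) \<longlongrightarrow> vm) at_bot \<and>
            ((\<lambda>p. H 1 p / p) \<longlongrightarrow> vp) at_top) \<and>
         (\<forall>p. deriv (H (-1)) p > 0 \<and> deriv (H 1) p < 0) \<and>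
         (H3 H \<longrightarrow>
            (\<forall>c a q b r. a \<in> {-1<..<1} \<and> q > 0 \<and> b \<in> {-1<..<1} \<and> r < 0 \<longrightarrow>
               compact ((KR - (relint_KR (Qplus a q) \<union> relint_KR (Qminus b r)))
                        \<inter> {z \<in> KR. H (fst z) (snd z) \<le> c})))"
proof -
  obtain \<epsilon> G where \<epsilon>: "\<epsilon> > 0" and G2: "C2_on ({-1-\<epsilon><..<1+\<epsilon>} \<times> UNIV) G"
    and GH: "\<forall>x\<in>{-1..1}. \<forall>p. G (x, p) = H x p"
    using h1 unfolding H1_def by blast
  have pos2: "\<forall>x\<in>{-1..1}. \<forall>p. deriv (deriv (H x)) p > 0" using h1 unfolding H1_def by blast
  define U where "U = {-1-\<epsilon><..<1+\<epsilon>} \<times> (UNIV :: real set)"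
  have oU: "open U" unfolding U_def by (intro open_Times) auto
  have KU: "(x, p) \<in> U" if "x \<in> {-1..1}" for x p using that \<epsilon> unfolding U_def by auto
  obtain gx gp where Gd: "\<forall>z\<in>U. (G has_derivative (\<lambda>(h, k). gx z * h + gp z * k)) (at z)"
    and C1p: "C1_on U gp"
    using G2 unfolding C2_on_def U_def by blast
  obtain gpx gpp where gpd: "\<forall>z\<in>U. (gp has_derivative (\<lambda>(h, k). gpx z * h + gpp z * k)) (at z)"
    using C1p unfolding C1_on_def by blast
  have contG: "continuous_on U G"
    using Gd by (metis has_derivative_continuous continuous_at_imp_continuous_on)
  have contgp: "continuous_on U gp"
    using gpd by (metis has_derivative_continuous continuous_at_imp_continuous_on)
  have D0: "((\<lambda>t. G (x, t)) has_real_derivative gp (x, p)) (at p)" if "x \<in> {-1..1}" for x p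
    using partial2[OF Gd[rule_format, OF KU[OF that]]] .
  have D1: "(H x has_real_derivative gp (x, p)) (at p)" if "x \<in> {-1..1}" for x p
  proof -
    have "H x = (\<lambda>t. G (x, t))" using GH that by auto
    then show ?thesis using D0[OF that] by simp
  qed
  have D2: "((\<lambda>t. gp (x, t)) has_real_derivative gpp (x, p)) (at p)" if "x \<in> {-1..1}" for x p
    using partial2[OF gpd[rule_format, OF KU[OF that]]] .
  have derivH: "deriv (H x) = (\<lambda>t. gp (x, t))" if "x \<in> {-1..1}" for x
    using D1[OF that] DERIV_imp_deriv by (intro ext) blast
  have gpp_pos: "gpp (x, p) > 0" if "x \<in> {-1..1}" for x p
  proof -
    have "deriv (deriv (H x)) p > 0" using pos2 that by blast
    then show ?thesis using derivH[OF that] DERIV_imp_deriv[OF D2[OF that]] by simp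
  qed
  have mo: "gp (x, s) < gp (x, t)" if "x \<in> {-1..1}" "s < t" for x s t
    using DERIV_pos_imp_increasing[OF that(2), of "\<lambda>t. gp (x, t)"] D2[OF that(1)] gpp_pos[OF that(1)]
    by blast
  have am: "argminp (H x) < ereal p \<longleftrightarrow> gp (x, p) > 0" "argminp (H x) > ereal p \<longleftrightarrow> gp (x, p) < 0"
    if "x \<in> {-1..1}" for x p
    using argmin_lemmas[of "H x" "\<lambda>t. gp (x, t)" "\<lambda>t. gpp (x, t)" p] D1[OF that] D2[OF that]
      gpp_pos[OF that] by auto
  have slice: "((\<lambda>x. gp (x, p)) \<longlongrightarrow> gp (x0, p)) (at x0)" if "x0 \<in> {-1..1}" for x0 p
  proof -
    have c1: "isCont gp (x0, p)" using contgp oU KU[OF that] continuous_on_eq_continuous_at by blast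
    have c2: "isCont (\<lambda>x. (x, p)) x0" by (intro continuous_intros)
    have "isCont (\<lambda>x. gp (x, p)) x0" using isCont_o2[OF c2, of gp] c1 by simp
    then show ?thesis by (simp add: isCont_def)
  qed
  have gm: "gp (-1, p) \<ge> 0" for p
  proof -
    have ev1: "eventually (\<lambda>x. argminp (H x) < ereal p) (at_right (-1))"
      using h4 unfolding H4_def by (intro order_tendstoD(2)[of _ "-\<infinity>"]) auto
    have ev2: "eventually (\<lambda>x. x \<in> {-1<..<1}) (at_right (-1::real))"
      using eventually_at_right_real[of "-1" 1] by simp
    have ev: "eventually (\<lambda>x. 0 \<le> gp (x, p)) (at_right (-1))"
      using ev1 ev2
    proof eventually_elim
      case (elim x)
      then have "x \<in> {-1..1}" by auto
      then show ?case using am(1)[of x p] elim by auto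
    qed
    have lim: "((\<lambda>x. gp (x, p)) \<longlongrightarrow> gp (-1, p)) (at_right (-1))"
      using tendsto_within_subset[OF slice[of "-1" p]] by auto
    show ?thesis using lim ev by (intro tendsto_lowerbound) auto
  qed
  have g1: "gp (1, p) \<le> 0" for p
  proof -
    have ev1: "eventually (\<lambda>x. argminp (H x) > ereal p) (at_left 1)"
      using h4 unfolding H4_def by (intro order_tendstoD(1)[of _ "\<infinity>"]) auto
    have ev2: "eventually (\<lambda>x. x \<in> {-1<..<1}) (at_left (1::real))"
      using eventually_at_left_real[of "-1" 1] by simp
    have ev: "eventually (\<lambda>x. gp (x, p) \<le> 0) (at_left 1)"
      using ev1 ev2
    proof eventually_elim
      case (elim x)
      then have "x \<in> {-1..1}" by auto
      then show ?case using am(2)[of x p] elim by auto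
    qed
    have lim: "((\<lambda>x. gp (x, p)) \<longlongrightarrow> gp (1, p)) (at_left 1)"
      using tendsto_within_subset[OF slice[of 1 p]] by auto
    show ?thesis using lim ev by (intro tendsto_upperbound) auto
  qed
  have m1: "(-1::real) \<in> {-1..1}" and p1: "(1::real) \<in> {-1..1}" by auto
  have gm_pos: "gp (-1, p) > 0" for p using mo[OF m1, of "p - 1" p] gm[of "p - 1"] by simp
  have g1_neg: "gp (1, p) < 0" for p using mo[OF p1, of p "p + 1"] g1[of "p + 1"] by simp
  define vm where "vm = Inf (range (\<lambda>p. gp (-1, p)))"
  define vp where "vp = Sup (range (\<lambda>p. gp (1, p)))"
  have bddm: "bdd_below (range (\<lambda>p. gp (-1, p)))" using gm by (auto intro!: bdd_belowI[of _ 0])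
  have bddp: "bdd_above (range (\<lambda>p. gp (1, p)))" using g1 by (auto intro!: bdd_aboveI[of _ 0])
  have vm_le: "vm \<le> gp (-1, p)" for p unfolding vm_def using bddm by (auto intro: cInf_lower)
  have vp_ge: "gp (1, p) \<le> vp" for p unfolding vp_def using bddp by (auto intro: cSup_upper)
  have vm0: "vm \<ge> 0" unfolding vm_def using gm by (auto intro!: cInf_greatest)
  have vp0: "vp \<le> 0" unfolding vp_def using g1 by (auto intro!: cSup_least)
  have limvm: "((\<lambda>p. gp (-1, p)) \<longlongrightarrow> vm) at_bot"
  proof (rule order_tendstoI)
    fix a assume "a < vm"
    then show "eventually (\<lambda>p. a < gp (-1, p)) at_bot"
      using vm_le by (intro always_eventually allI) (metis less_le_trans)
  next
    fix a assume "vm < a"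
    then obtain p0 where p0: "gp (-1, p0) < a"
      using cInf_lessD[of "range (\<lambda>p. gp (-1, p))" a] unfolding vm_def by auto
    show "eventually (\<lambda>p. gp (-1, p) < a) at_bot"
      unfolding eventually_at_bot_linorder
    proof (intro exI[of _ p0] allI impI)
      fix n assume "n \<le> p0"
      then have "gp (-1, n) \<le> gp (-1, p0)" using mo[OF m1, of n p0] by (cases "n = p0") auto
      then show "gp (-1, n) < a" using p0 by simp
    qed
  qed
  have limvp: "((\<lambda>p. gp (1, p)) \<longlongrightarrow> vp) at_top"
  proof (rule order_tendstoI)
    fix a assume "vp < a"
    then show "eventually (\<lambda>p. gp (1, p) < a) at_top"
      using vp_ge by (intro always_eventually allI) (metis le_less_trans)
  next
    fix a assume "a < vp"
    then obtain p0 where p0: "a < gp (1, p0)"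
      using less_cSupD[of "range (\<lambda>p. gp (1, p))" a] unfolding vp_def by auto
    show "eventually (\<lambda>p. a < gp (1, p)) at_top"
      unfolding eventually_at_top_linorder
    proof (intro exI[of _ p0] allI impI)
      fix n assume "n \<ge> p0"
      then have "gp (1, p0) \<le> gp (1, n)" using mo[OF p1, of p0 n] by (cases "n = p0") auto
      then show "a < gp (1, n)" using p0 by simp
    qed
  qed
  have quotm: "((\<lambda>p. H (-1) p / p) \<longlongrightarrow> vm) at_bot"
  proof -
    have "((\<lambda>t. - H (-1) (-t) / t) \<longlongrightarrow> vm) at_top"
    proof (rule lhospital_at_top_at_top[where g'="\<lambda>_. 1" and f'="\<lambda>t. gp (-1, -t)"])
      show "LIM x at_top. x :> at_top" by (rule filterlim_ident)
      show "eventually (\<lambda>x. (1::real) \<noteq> 0) at_top" by simp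
      show "eventually (\<lambda>t. ((\<lambda>t. - H (-1) (-t)) has_real_derivative gp (-1, -t)) (at t)) at_top"
      proof (intro always_eventually allI)
        fix t :: real
        have "((\<lambda>t. H (-1) (-t)) has_real_derivative gp (-1, -t) * (-1)) (at t)"
          by (rule DERIV_chain2[OF D1[OF m1]]) (auto intro!: derivative_eq_intros)
        then have "((\<lambda>t. - H (-1) (-t)) has_real_derivative - (gp (-1, -t) * (-1))) (at t)"
          by (rule DERIV_minus)
        then show "((\<lambda>t. - H (-1) (-t)) has_real_derivative gp (-1, -t)) (at t)" by simp
      qed
      show "eventually (\<lambda>x. ((\<lambda>x. x) has_real_derivative 1) (at x)) at_top"
        by (auto intro!: always_eventually derivative_eq_intros)
      show "((\<lambda>t. gp (-1, -t) / 1) \<longlongrightarrow> vm) at_top"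
        using limvm unfolding filterlim_at_bot_mirror by simp
    qed
    then show ?thesis unfolding filterlim_at_bot_mirror by simp
  qed
  have quotp: "((\<lambda>p. H 1 p / p) \<longlongrightarrow> vp) at_top"
  proof (rule lhospital_at_top_at_top[where g'="\<lambda>_. 1" and f'="\<lambda>t. gp (1, t)"])
    show "LIM x at_top. x :> at_top" by (rule filterlim_ident)
    show "eventually (\<lambda>x. (1::real) \<noteq> 0) at_top" by simp
    show "eventually (\<lambda>t. (H 1 has_real_derivative gp (1, t)) (at t)) at_top"
      using D1[OF p1] by (auto intro!: always_eventually)
    show "eventually (\<lambda>x. ((\<lambda>x. x) has_real_derivative 1) (at x)) at_top"
      by (auto intro!: always_eventually derivative_eq_intros)
    show "((\<lambda>t. gp (1, t) / 1) \<longlongrightarrow> vp) at_top"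
      using limvp by simp
  qed
  have part1: "\<exists>vm vp.
            ((\<lambda>p. deriv (H (-1)) p) \<longlongrightarrow> vm) at_bot \<and>
            ((\<lambda>p. deriv (H 1) p) \<longlongrightarrow> vp) at_top \<and>
            vm \<ge> 0 \<and> vp \<le> 0 \<and>
            ((\<lambda>p. H (-1) p / p) \<longlongrightarrow> vm) at_bot \<and>
            ((\<lambda>p. H 1 p / p) \<longlongrightarrow> vp) at_top"
    using limvm limvp vm0 vp0 quotm quotp derivH[OF m1] derivH[OF p1] by auto
  have part2: "\<forall>p. deriv (H (-1)) p > 0 \<and> deriv (H 1) p < 0"
    using gm_pos g1_neg derivH[OF m1] derivH[OF p1] by auto
  have part3: "H3 H \<longrightarrow>
            (\<forall>c a q b r. a \<in> {-1<..<1} \<and> q > 0 \<and> b \<in> {-1<..<1} \<and> r < 0 \<longrightarrow>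
               compact ((KR - (relint_KR (Qplus a q) \<union> relint_KR (Qminus b r)))
                        \<inter> {z \<in> KR. H (fst z) (snd z) \<le> c}))"
  proof (intro impI allI)
    assume h3: "H3 H"
    fix c a q b r :: real
    assume abqr: "a \<in> {-1<..<1} \<and> q > 0 \<and> b \<in> {-1<..<1} \<and> r < 0"
    then have a: "-1 < a" "a < 1" and b: "-1 < b" "b < 1" by auto
    have inner: "(\<exists>p. gp (x, p) > 0) \<and> (\<exists>p. gp (x, p) < 0)" if x: "x \<in> {-1<..<1}" for x
    proof -
      have xK: "x \<in> {-1..1}" using x by auto
      have "compact {x} \<and> {x} \<subseteq> {-1<..<1}" using x by auto
      then have "eventually (\<lambda>p. \<forall>y\<in>{x}. H y p / \<bar>p\<bar> \<ge> 1) at_infinity"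
        using h3 unfolding H3_def by blast
      then obtain bb where bb: "\<And>p. bb \<le> norm p \<Longrightarrow> H x p / \<bar>p\<bar> \<ge> 1"
        unfolding eventually_at_infinity by auto
      define p0 where "p0 = max bb 1"
      have p0: "p0 > 0" "bb \<le> p0" unfolding p0_def by auto
      have Hx0: "H x 0 = 0" using H0 xK by blast
      have "H x p0 / \<bar>p0\<bar> \<ge> 1" using bb[of p0] p0 by simp
      then have Hp: "H x p0 > 0" using p0 by (simp add: le_divide_eq)
      have "H x (-p0) / \<bar>-p0\<bar> \<ge> 1" using bb[of "-p0"] p0 by simp
      then have Hm: "H x (-p0) > 0" using p0 by (simp add: le_divide_eq)
      obtain z where z: "0 < z" "z < p0" "H x p0 - H x 0 = (p0 - 0) * gp (x, z)"
        using MVT2[OF p0(1), of "H x" "\<lambda>t. gp (x, t)"] D1[OF xK] by blast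
      have "gp (x, z) > 0" using z Hp Hx0 p0 by (simp add: zero_less_mult_iff)
      moreover
      have mp0: "- p0 < 0" using p0 by simp
      obtain w where w: "-p0 < w" "w < 0" "H x 0 - H x (-p0) = (0 - - p0) * gp (x, w)"
        using MVT2[OF mp0, of "H x" "\<lambda>t. gp (x, t)"] D1[OF xK] by blast
      have "p0 * gp (x, w) < 0" using w Hm Hx0 by simp
      then have "gp (x, w) < 0" using p0(1) by (simp add: mult_less_0_iff)
      ultimately show ?thesis by blast
    qed
    have pos_ex: "\<exists>p. gp (x, p) > 0" if "x \<in> {-1..a}" for x
    proof (cases "x = -1")
      case True then show ?thesis using gm_pos by blast
    next
      case False then show ?thesis using inner[of x] that a by auto
    qed
    have neg_ex: "\<exists>p. gp (x, p) < 0" if "x \<in> {b..1}" for x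
    proof (cases "x = 1")
      case True then show ?thesis using g1_neg by blast
    next
      case False then show ?thesis using inner[of x] that b by auto
    qed
    have subU1: "{-1..a} \<times> UNIV \<subseteq> U" using KU a by auto
    have subU2: "{b..1} \<times> UNIV \<subseteq> U" using KU b by auto
    obtain B1 where B1: "\<forall>x\<in>{-1..a}. \<forall>p. G (x, p) \<le> c \<longrightarrow> p \<le> B1"
    proof -
      have "\<exists>B. \<forall>x\<in>{-1..a}. \<forall>p. (\<lambda>x p. G (x, p)) x p \<le> c \<longrightarrow> p \<le> B"
      proof (rule core_bound[where d="\<lambda>x p. gp (x, p)"])
        show "compact {-1..a}" by simp
        show "continuous_on ({-1..a} \<times> UNIV) (\<lambda>z. G (fst z, snd z))"
          using continuous_on_subset[OF contG subU1] by simp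
        show "continuous_on ({-1..a} \<times> UNIV) (\<lambda>z. gp (fst z, snd z))"
          using continuous_on_subset[OF contgp subU1] by simp
        show "((\<lambda>p. G (x, p)) has_real_derivative gp (x, p)) (at p)" if "x \<in> {-1..a}" for x p
          using D0[of x p] that a by auto
        show "gp (x, s) < gp (x, t)" if "x \<in> {-1..a}" "s < t" for x s t
          using mo[of x s t] that a by auto
        show "\<exists>p. gp (x, p) > 0" if "x \<in> {-1..a}" for x using pos_ex[OF that] .
      qed
      then show ?thesis using that by auto
    qed
    obtain B2 where B2: "\<forall>x\<in>{b..1}. \<forall>p. G (x, -p) \<le> c \<longrightarrow> p \<le> B2"
    proof -
      have "\<exists>B. \<forall>x\<in>{b..1}. \<forall>p. (\<lambda>x p. G (x, -p)) x p \<le> c \<longrightarrow> p \<le> B"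
      proof (rule core_bound[where d="\<lambda>x p. - gp (x, -p)"])
        show "compact {b..1}" by simp
        have im: "(\<lambda>z. (fst z, - snd z)) ` ({b..1} \<times> UNIV) \<subseteq> U" using subU2 by auto
        have cm: "continuous_on ({b..1} \<times> UNIV) (\<lambda>z::real\<times>real. (fst z, - snd z))"
          by (intro continuous_intros)
        show "continuous_on ({b..1} \<times> UNIV) (\<lambda>z. G (fst z, - snd z))"
          using continuous_on_compose2[OF contG cm im] by simp
        have "continuous_on ({b..1} \<times> UNIV) (\<lambda>z. gp (fst z, - snd z))"
          using continuous_on_compose2[OF contgp cm im] by simp
        then show "continuous_on ({b..1} \<times> UNIV) (\<lambda>z. - gp (fst z, - snd z))"
          by (intro continuous_intros)
        show "((\<lambda>p. G (x, -p)) has_real_derivative - gp (x, - p)) (at p)" if "x \<in> {b..1}" for x p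
        proof -
          have xK: "x \<in> {-1..1}" using that b by auto
          have "((\<lambda>t. G (x, - t)) has_real_derivative gp (x, - p) * (-1)) (at p)"
            by (rule DERIV_chain2[OF D0[OF xK]]) (auto intro!: derivative_eq_intros)
          then show ?thesis by simp
        qed
        show "- gp (x, - s) < - gp (x, - t)" if "x \<in> {b..1}" "s < t" for x s t
          using mo[of x "-t" "-s"] that b by auto
        show "\<exists>p. - gp (x, - p) > 0" if xb: "x \<in> {b..1}" for x
        proof -
          obtain p where "gp (x, p) < 0" using neg_ex[OF xb] by blast
          then show ?thesis by (intro exI[of _ "-p"]) simp
        qed
      qed
      then show ?thesis using that by auto
    qed
    define A1 where "A1 = relint_KR (Qplus a q)"
    define A2 where "A2 = relint_KR (Qminus b r)"
    have sub1: "KR \<inter> ({a<..} \<times> {q<..}) \<subseteq> A1" unfolding A1_def relint_KR_def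
      by (rule interior_of_maximal) (auto simp: Qplus_def KR_def intro!: openin_open_Int open_Times)
    have sub2: "KR \<inter> ({..<b} \<times> {..<r}) \<subseteq> A2" unfolding A2_def relint_KR_def
      by (rule interior_of_maximal) (auto simp: Qminus_def KR_def intro!: openin_open_Int open_Times)
    have cKR: "closed KR" unfolding KR_def by (intro closed_Times) auto
    have "closedin (top_of_set KR) (KR - (A1 \<union> A2))"
      using closedin_topspace[of "top_of_set KR"]
      by (intro closedin_diff openin_Un) (auto simp: A1_def A2_def relint_KR_def openin_interior_of)
    then have cl1: "closed (KR - (A1 \<union> A2))" using closedin_closed_trans cKR by blast
    have lev: "{z \<in> KR. H (fst z) (snd z) \<le> c} = KR \<inter> G -` {..c}"
      using GH by (auto simp: KR_def)
    have KRU: "KR \<subseteq> U" using KU unfolding KR_def by auto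
    have cl2: "closed {z \<in> KR. H (fst z) (snd z) \<le> c}"
      unfolding lev by (rule continuous_closed_preimage[OF continuous_on_subset[OF contG KRU] cKR]) auto
    define hi where "hi = max q B1"
    define lo where "lo = min r (- B2)"
    have bsub: "(KR - (A1 \<union> A2)) \<inter> {z \<in> KR. H (fst z) (snd z) \<le> c} \<subseteq> {-1..1} \<times> {lo..hi}"
    proof
      fix zz assume zin: "zz \<in> (KR - (A1 \<union> A2)) \<inter> {z \<in> KR. H (fst z) (snd z) \<le> c}"
      obtain x p where zp: "zz = (x, p)" by (cases zz)
      have z: "(x, p) \<in> KR" "(x, p) \<notin> A1" "(x, p) \<notin> A2" "H x p \<le> c" using zin zp by auto
      have xK: "x \<in> {-1..1}" using z(1) by (auto simp: KR_def)
      have G: "G (x, p) \<le> c" using GH xK z(4) by auto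
      have "p \<le> hi"
      proof (rule ccontr)
        assume "\<not> p \<le> hi"
        then have pq: "p > q" "p > B1" unfolding hi_def by auto
        then have "x \<le> a" using z(1,2) sub1 by force
        then have "x \<in> {-1..a}" using xK by auto
        then show False using B1 G pq by force
      qed
      moreover have "lo \<le> p"
      proof (rule ccontr)
        assume "\<not> lo \<le> p"
        then have pr: "p < r" "p < - B2" unfolding lo_def by auto
        then have "x \<ge> b" using z(1,3) sub2 by force
        then have "x \<in> {b..1}" using xK by auto
        then have "-p \<le> B2" using B2 G by force
        then show False using pr by auto
      qed
      ultimately show "zz \<in> {-1..1} \<times> {lo..hi}" using xK zp by auto
    qed
    have "bounded ((KR - (A1 \<union> A2)) \<inter> {z \<in> KR. H (fst z) (snd z) \<le> c})"
      by (rule bounded_subset[OF bounded_Times[OF bounded_closed_interval bounded_closed_interval] bsub])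
    then show "compact ((KR - (relint_KR (Qplus a q) \<union> relint_KR (Qminus b r)))
                        \<inter> {z \<in> KR. H (fst z) (snd z) \<le> c})"
      using cl1 cl2 unfolding A1_def A2_def by (simp add: compact_eq_bounded_closed closed_Int)
  qed
  show ?thesis using part1 part2 part3 by blast
qed

end
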